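(* Let $\mu$ be a Borel probability measure on $\mathbb{R}^n$ and $\Lambda\subset\mathbb{R}^n$. The following are equivalent: (i) $\{e_\lambda\}_{\lambda\in\Lambda}$ is orthogonal in $L^2(\mu)$; (ii) with $\mathcal{H}(\Lambda)$ the closed linear span of $\{e_\lambda\}_{\lambda\in\Lambda}$ in $L^2(\mu)$, there is a linear isometry $W_\Lambda:\mathcal{H}(\Lambda)\to L^2(G,\mu_{Bohr})$ with $W_\Lambda e_\lambda=\tilde e_\lambda$ for all $\lambda\in\Lambda$; (iii) the function $h_\Lambda(t):=\sum_{\lambda\in\Lambda}|\hat\mu(t-\lambda)|^2$ satisfies $h_\Lambda(t)\le 1$ for all $t\in\mathbb{R}^n$.
   Context: $e_\lambda(x)=e^{2\pi i\lambda\cdot x}$; $\hat\mu(t)=\int e^{2\pi it\cdot x}\,d\mu(x)$. The Bohr compactification $G$ is the set of all group homomorphisms $\chi:\mathbb{R}^n\to\mathbb{T}$ with pointwise multiplication and the topology of pointwise convergence (a compact abelian group, the dual of $\mathbb{R}^n$ with discrete topology); $\mu_{Bohr}$ is its normalized Haar measure, and $\tilde e_\lambda(\chi)=\chi(\lambda)$ for $\chi\in G$. *)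

theory Defs
  imports "HOL-Probability.Probability"
begin

definition expo :: "real^'n \<Rightarrow> real^'n \<Rightarrow> complex" where
  "expo l x = cis (2 * pi * (l \<bullet> x))"

definition fourier_meas :: "(real^'n) measure \<Rightarrow> real^'n \<Rightarrow> complex" where
  "fourier_meas mu t = (LINT x|mu. cis (2 * pi * (t \<bullet> x)))"

definition sq_integrable :: "'a measure \<Rightarrow> ('a \<Rightarrow> complex) \<Rightarrow> bool" where
  "sq_integrable M f \<longleftrightarrow> f \<in> borel_measurable M \<and> integrable M (\<lambda>x. (cmod (f x))^2)"

definition L2_norm :: "'a measure \<Rightarrow> ('a \<Rightarrow> complex) \<Rightarrow> real" where
  "L2_norm M f = sqrt (LINT x|M. (cmod (f x))^2)"

definition trig_polys :: "(real^'n) set \<Rightarrow> (real^'n \<Rightarrow> complex) set" where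
  "trig_polys Lam = {(\<lambda>x. \<Sum>l\<in>F. c l * expo l x) | F c. finite F \<and> F \<subseteq> Lam}"

definition closed_span :: "(real^'n) measure \<Rightarrow> (real^'n) set \<Rightarrow> (real^'n \<Rightarrow> complex) set" where
  "closed_span mu Lam = {f. sq_integrable mu f \<and>
      (\<forall>e>0. \<exists>p\<in>trig_polys Lam. L2_norm mu (\<lambda>x. f x - p x) < e)}"

text \<open>The Bohr compactification of R^n: all group homomorphisms R^n -> T (T = unit circle in C).\<close>
definition bohr_group :: "(real^'n \<Rightarrow> complex) set" where
  "bohr_group = {chi. (\<forall>x. cmod (chi x) = 1) \<and> (\<forall>x y. chi (x + y) = chi x * chi y)}"

text \<open>Measurable space on G: trace of the product sigma-algebra (generated by the evaluation
  maps chi -> chi(lambda)); this is the Baire sigma-algebra of the compact group G.\<close>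
definition bohr_space :: "(real^'n \<Rightarrow> complex) measure" where
  "bohr_space = restrict_space (Pi\<^sub>M UNIV (\<lambda>_. borel)) bohr_group"

definition bohr_haar :: "(real^'n \<Rightarrow> complex) measure \<Rightarrow> bool" where
  "bohr_haar M \<longleftrightarrow> prob_space M \<and> sets M = sets bohr_space \<and> space M = bohr_group \<and>
     (\<forall>psi\<in>bohr_group. distr M M (\<lambda>chi x. psi x * chi x) = M)"

end

theory Submission
  imports Defs "HOL-Analysis.Infinite_Set_Sum"
begin


lemma meas_cnj[measurable]: "f \<in> borel_measurable M \<Longrightarrow> (\<lambda>x. cnj (f x)) \<in> borel_measurable M"
  by (rule borel_measurable_continuous_on[OF continuous_on_cnj[OF continuous_on_id]])

definition ip :: "'a measure \<Rightarrow> ('a \<Rightarrow> complex) \<Rightarrow> ('a \<Rightarrow> complex) \<Rightarrow> complex" where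
  "ip M f g = (LINT x|M. f x * cnj (g x))"

definition nsq :: "'a measure \<Rightarrow> ('a \<Rightarrow> complex) \<Rightarrow> real" where
  "nsq M f = (LINT x|M. (cmod (f x))^2)"

lemma sq_int_prod:
  assumes "sq_integrable M f" "sq_integrable M g"
  shows "integrable M (\<lambda>x. f x * cnj (g x))"
proof -
  have m: "f \<in> borel_measurable M" "g \<in> borel_measurable M"
    "integrable M (\<lambda>x. (cmod (f x))^2)" "integrable M (\<lambda>x. (cmod (g x))^2)"
    using assms by (auto simp: sq_integrable_def)
  show ?thesis
  proof (rule Bochner_Integration.integrable_bound[of _ "\<lambda>x. (cmod (f x))^2 + (cmod (g x))^2"])
    show "integrable M (\<lambda>x. (cmod (f x))^2 + (cmod (g x))^2)" using m by auto
    show "(\<lambda>x. f x * cnj (g x)) \<in> borel_measurable M" using m by measurable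
    show "AE x in M. norm (f x * cnj (g x)) \<le> norm ((cmod (f x))^2 + (cmod (g x))^2)"
    proof (rule AE_I2)
      fix x
      have "2*(cmod (f x) * cmod (g x)) = (cmod (f x))^2 + (cmod (g x))^2 - (cmod (f x) - cmod (g x))^2"
        by (simp add: power2_eq_square algebra_simps)
      then have "cmod (f x) * cmod (g x) \<le> (cmod (f x))^2 + (cmod (g x))^2"
        using zero_le_power2[of "cmod (f x) - cmod (g x)"] zero_le_power2[of "cmod (f x)"]
          zero_le_power2[of "cmod (g x)"] by linarith
      then show "norm (f x * cnj (g x)) \<le> norm ((cmod (f x))^2 + (cmod (g x))^2)"
        by (simp add: norm_mult)
    qed
  qed
qed

lemma sq_int_add:
  assumes "sq_integrable M f" "sq_integrable M g"
  shows "sq_integrable M (\<lambda>x. f x + g x)"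
proof -
  have m: "f \<in> borel_measurable M" "g \<in> borel_measurable M"
    "integrable M (\<lambda>x. (cmod (f x))^2)" "integrable M (\<lambda>x. (cmod (g x))^2)"
    using assms by (auto simp: sq_integrable_def)
  have "integrable M (\<lambda>x. (cmod (f x + g x))^2)"
  proof (rule Bochner_Integration.integrable_bound[of _ "\<lambda>x. 2*(cmod (f x))^2 + 2*(cmod (g x))^2"])
    show "integrable M (\<lambda>x. 2*(cmod (f x))^2 + 2*(cmod (g x))^2)" using m by auto
    show "(\<lambda>x. (cmod (f x + g x))^2) \<in> borel_measurable M" using m by measurable
    show "AE x in M. norm ((cmod (f x + g x))^2) \<le> norm (2*(cmod (f x))^2 + 2*(cmod (g x))^2)"
    proof (rule AE_I2)
      fix x
      have t: "cmod (f x + g x) \<le> cmod (f x) + cmod (g x)" by (rule norm_triangle_ineq)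
      have "(cmod (f x + g x))^2 \<le> (cmod (f x) + cmod (g x))^2"
        using t by (simp add: power_mono)
      also have "\<dots> = 2*(cmod (f x))^2 + 2*(cmod (g x))^2 - (cmod (f x) - cmod (g x))^2"
        by (simp add: power2_eq_square algebra_simps)
      also have "\<dots> \<le> 2*(cmod (f x))^2 + 2*(cmod (g x))^2" by simp
      finally show "norm ((cmod (f x + g x))^2) \<le> norm (2*(cmod (f x))^2 + 2*(cmod (g x))^2)"
        by simp
    qed
  qed
  then show ?thesis using m by (auto simp: sq_integrable_def)
qed

lemma sq_int_scale:
  assumes "sq_integrable M f"
  shows "sq_integrable M (\<lambda>x. a * f x)"
  using assms by (auto simp: sq_integrable_def norm_mult power_mult_distrib)

lemma sq_int_diff:
  assumes "sq_integrable M f" "sq_integrable M g"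
  shows "sq_integrable M (\<lambda>x. f x - g x)"
  using sq_int_add[OF assms(1) sq_int_scale[OF assms(2), of "-1"]] by simp

lemma sq_int_sum:
  assumes "\<And>i. i \<in> F \<Longrightarrow> sq_integrable M (f i)"
  shows "sq_integrable M (\<lambda>x. \<Sum>i\<in>F. f i x)"
  using assms
proof (induction F rule: infinite_finite_induct)
  case (infinite F) then show ?case by (simp add: sq_integrable_def)
next
  case empty then show ?case by (simp add: sq_integrable_def)
next
  case (insert i F) then show ?case by (simp add: sq_int_add)
qed

lemma sq_int_zero: "sq_integrable M (\<lambda>x. 0)" by (simp add: sq_integrable_def)

lemma ip_cnj: "ip M g f = cnj (ip M f g)"
proof -
  have "cnj (LINT x|M. f x * cnj (g x)) = (LINT x|M. cnj (f x * cnj (g x)))"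
    by (rule Bochner_Integration.integral_cnj[symmetric])
  then show ?thesis unfolding ip_def by (simp add: mult.commute)
qed

lemma ip_add_left:
  assumes "sq_integrable M f" "sq_integrable M g" "sq_integrable M h"
  shows "ip M (\<lambda>x. f x + g x) h = ip M f h + ip M g h"
  unfolding ip_def using sq_int_prod[OF assms(1,3)] sq_int_prod[OF assms(2,3)]
  by (simp add: distrib_right)

lemma ip_scale_left: "ip M (\<lambda>x. a * f x) h = a * ip M f h"
  unfolding ip_def by (simp add: mult.assoc)

lemma ip_scale_right: "ip M f (\<lambda>x. a * h x) = cnj a * ip M f h"
  by (metis ip_cnj ip_scale_left complex_cnj_mult)

lemma ip_diff_left:
  assumes "sq_integrable M f" "sq_integrable M g" "sq_integrable M h"
  shows "ip M (\<lambda>x. f x - g x) h = ip M f h - ip M g h"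
  unfolding ip_def using sq_int_prod[OF assms(1,3)] sq_int_prod[OF assms(2,3)]
  by (simp add: left_diff_distrib)

lemma ip_add_right:
  assumes "sq_integrable M f" "sq_integrable M g" "sq_integrable M h"
  shows "ip M h (\<lambda>x. f x + g x) = ip M h f + ip M h g"
  by (metis assms ip_add_left ip_cnj complex_cnj_add)

lemma ip_diff_right:
  assumes "sq_integrable M f" "sq_integrable M g" "sq_integrable M h"
  shows "ip M h (\<lambda>x. f x - g x) = ip M h f - ip M h g"
  by (metis assms ip_diff_left ip_cnj complex_cnj_diff)

lemma ip_sum_left:
  assumes "\<And>i. i \<in> F \<Longrightarrow> sq_integrable M (f i)" "sq_integrable M h"
  shows "ip M (\<lambda>x. \<Sum>i\<in>F. f i x) h = (\<Sum>i\<in>F. ip M (f i) h)"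
  using assms
proof (induction F rule: infinite_finite_induct)
  case (infinite F) then show ?case by (simp add: ip_def)
next
  case empty then show ?case by (simp add: ip_def)
next
  case (insert i F)
  then show ?case by (simp add: ip_add_left sq_int_sum)
qed

lemma ip_sum_right:
  assumes "\<And>i. i \<in> F \<Longrightarrow> sq_integrable M (f i)" "sq_integrable M h"
  shows "ip M h (\<lambda>x. \<Sum>i\<in>F. f i x) = (\<Sum>i\<in>F. ip M h (f i))"
proof -
  have "ip M h (\<lambda>x. \<Sum>i\<in>F. f i x) = cnj (ip M (\<lambda>x. \<Sum>i\<in>F. f i x) h)" by (rule ip_cnj)
  also have "\<dots> = cnj (\<Sum>i\<in>F. ip M (f i) h)" using ip_sum_left[of F M f h] assms by simp
  also have "\<dots> = (\<Sum>i\<in>F. cnj (ip M (f i) h))" by (rule cnj_sum)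
  also have "\<dots> = (\<Sum>i\<in>F. ip M h (f i))" by (simp add: ip_cnj[of M h])
  finally show ?thesis .
qed

lemma ip_self: "ip M f f = complex_of_real (nsq M f)"
proof -
  have "\<And>x. f x * cnj (f x) = complex_of_real ((cmod (f x))^2)"
    by (metis complex_norm_square of_real_power)
  then show ?thesis unfolding ip_def nsq_def by (simp del: of_real_power)
qed

lemma nsq_nonneg: "nsq M f \<ge> 0"
  unfolding nsq_def by simp

lemma L2_norm_nsq: "L2_norm M f = sqrt (nsq M f)"
  by (simp add: L2_norm_def nsq_def)


definition orthonormal :: "'a measure \<Rightarrow> ('i \<Rightarrow> 'a \<Rightarrow> complex) \<Rightarrow> 'i set \<Rightarrow> bool" where
  "orthonormal M u A \<longleftrightarrow> (\<forall>i\<in>A. sq_integrable M (u i)) \<and>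
     (\<forall>i\<in>A. \<forall>j\<in>A. ip M (u i) (u j) = (if i = j then 1 else 0))"

lemma cnorm_sq: "complex_of_real ((cmod z)^2) = z * cnj z"
  by (metis complex_norm_square of_real_power)

lemma alg:
  fixes X :: complex
  shows "X - (\<Sum>i\<in>F. cnj (c i) * a i) - (\<Sum>i\<in>F. c i * cnj (a i)) + (\<Sum>i\<in>F. c i * cnj (c i))
    = X - (\<Sum>i\<in>F. a i * cnj (a i)) + (\<Sum>i\<in>F. (c i - a i) * cnj (c i - a i))"
proof -
  have e: "\<And>i. (c i - a i) * cnj (c i - a i) = (c i * cnj (c i) - c i * cnj (a i)) - (cnj (c i) * a i - a i * cnj (a i))"
    by (simp add: algebra_simps)
  have "(\<Sum>i\<in>F. (c i - a i) * cnj (c i - a i)) =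
     ((\<Sum>i\<in>F. c i * cnj (c i)) - (\<Sum>i\<in>F. c i * cnj (a i))) - ((\<Sum>i\<in>F. cnj (c i) * a i) - (\<Sum>i\<in>F. a i * cnj (a i)))"
    unfolding e by (simp only: sum_subtractf)
  then show ?thesis by simp
qed

lemma expand:
  assumes on: "orthonormal M u A" and F: "finite F" "F \<subseteq> A" and f: "sq_integrable M f"
  shows "nsq M (\<lambda>x. f x - (\<Sum>i\<in>F. c i * u i x)) =
     nsq M f - (\<Sum>i\<in>F. (cmod (ip M f (u i)))^2) + (\<Sum>i\<in>F. (cmod (c i - ip M f (u i)))^2)"
proof -
  have ui: "\<And>i. i \<in> F \<Longrightarrow> sq_integrable M (u i)" using on F unfolding orthonormal_def by auto
  have cui: "\<And>i. i \<in> F \<Longrightarrow> sq_integrable M (\<lambda>x. c i * u i x)" by (rule sq_int_scale[OF ui])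
  have o: "\<forall>i\<in>A. \<forall>j\<in>A. ip M (u i) (u j) = (if i = j then 1 else 0)"
    using on unfolding orthonormal_def by (rule conjunct2)
  have oij: "ip M (u i) (u j) = (if i = j then 1 else 0)" if "i \<in> F" "j \<in> F" for i j
  proof -
    have "i \<in> A" "j \<in> A" using that F by auto
    then show ?thesis using o by blast
  qed
  define S where "S = (\<lambda>x. \<Sum>i\<in>F. c i * u i x)"
  define a where "a i = ip M f (u i)" for i
  have S: "sq_integrable M S" unfolding S_def by (rule sq_int_sum) (rule cui)
  have fS: "ip M f S = (\<Sum>i\<in>F. cnj (c i) * a i)"
    unfolding S_def a_def by (simp add: ip_sum_right[OF cui f] ip_scale_right)
  have Sf: "ip M S f = (\<Sum>i\<in>F. c i * cnj (a i))"
    unfolding S_def a_def by (simp add: ip_sum_left[OF cui f] ip_scale_left ip_cnj[of M "u i" f for i])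
  have SS: "ip M S S = (\<Sum>i\<in>F. c i * cnj (c i))"
  proof -
    have "ip M S S = (\<Sum>i\<in>F. c i * ip M (u i) S)"
      unfolding S_def[of] by (subst ip_sum_left[OF cui]) (simp_all add: S[unfolded S_def] ip_scale_left)
    also have "\<dots> = (\<Sum>i\<in>F. c i * (\<Sum>j\<in>F. cnj (c j) * ip M (u i) (u j)))"
      unfolding S_def by (intro sum.cong refl) (simp add: ip_sum_right[OF cui ui] ip_scale_right)
    also have "\<dots> = (\<Sum>i\<in>F. c i * cnj (c i))"
    proof (intro sum.cong refl)
      fix i assume i: "i \<in> F"
      have "(\<Sum>j\<in>F. cnj (c j) * ip M (u i) (u j)) = (\<Sum>j\<in>F. if j = i then cnj (c j) else 0)"
        by (intro sum.cong refl) (simp add: oij i)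
      also have "\<dots> = cnj (c i)" using F i by (simp add: sum.delta')
      finally show "c i * (\<Sum>j\<in>F. cnj (c j) * ip M (u i) (u j)) = c i * cnj (c i)" by simp
    qed
    finally show ?thesis .
  qed
  have "complex_of_real (nsq M (\<lambda>x. f x - S x)) = ip M (\<lambda>x. f x - S x) (\<lambda>x. f x - S x)"
    by (simp add: ip_self)
  also have "\<dots> = ip M f f - ip M f S - ip M S f + ip M S S"
    using f S sq_int_diff[OF f S] by (simp add: ip_diff_left ip_diff_right)
  also have "\<dots> = complex_of_real (nsq M f) - (\<Sum>i\<in>F. cnj (c i) * a i) - (\<Sum>i\<in>F. c i * cnj (a i))
      + (\<Sum>i\<in>F. c i * cnj (c i))"
    unfolding fS Sf SS by (subst ip_self) (rule refl)
  also have "\<dots> = complex_of_real (nsq M f) - (\<Sum>i\<in>F. a i * cnj (a i))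
      + (\<Sum>i\<in>F. (c i - a i) * cnj (c i - a i))"
    by (rule alg)
  also have "\<dots> = complex_of_real (nsq M f - (\<Sum>i\<in>F. (cmod (a i))^2) + (\<Sum>i\<in>F. (cmod (c i - a i))^2))"
    by (simp add: cnorm_sq del: of_real_power)
  finally show ?thesis unfolding S_def a_def of_real_eq_iff .
qed

lemma bessel:
  assumes on: "orthonormal M u A" and F: "finite F" "F \<subseteq> A" and f: "sq_integrable M f"
  shows "(\<Sum>i\<in>F. (cmod (ip M f (u i)))^2) \<le> nsq M f"
  using expand[OF assms, of "\<lambda>i. ip M f (u i)"]
    nsq_nonneg[of M "\<lambda>x. f x - (\<Sum>i\<in>F. ip M f (u i) * u i x)"] by simp

lemma nsq_neg: "nsq M (\<lambda>x. - f x) = nsq M f"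
  by (simp add: nsq_def)

lemma nsq_zero: "nsq M (\<lambda>x. 0) = 0" by (simp add: nsq_def)

lemma ortho_sum:
  assumes on: "orthonormal M u A" and F: "finite F" "F \<subseteq> A"
  shows "nsq M (\<lambda>x. \<Sum>i\<in>F. c i * u i x) = (\<Sum>i\<in>F. (cmod (c i))^2)"
proof -
  have "\<And>i. ip M (\<lambda>x. 0) (u i) = 0" by (simp add: ip_def)
  then show ?thesis
    using expand[OF assms sq_int_zero, of c] nsq_neg[of M "\<lambda>x. \<Sum>i\<in>F. c i * u i x"]
    by (simp add: nsq_zero)
qed


definition ssum :: "('i \<Rightarrow> complex) \<Rightarrow> 'i set \<Rightarrow> real" where
  "ssum c F = (\<Sum>i\<in>F. (cmod (c i))^2)"

definition tot :: "('i \<Rightarrow> complex) \<Rightarrow> 'i set \<Rightarrow> real" where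
  "tot c A = Sup (ssum c ` {F. finite F \<and> F \<subseteq> A})"

lemma ssum_nonneg: "ssum c F \<ge> 0"
  unfolding ssum_def by (simp add: sum_nonneg)

lemma ssum_mono: "finite G \<Longrightarrow> F \<subseteq> G \<Longrightarrow> ssum c F \<le> ssum c G"
  unfolding ssum_def by (rule sum_mono2) auto

lemma ssum_union: "finite F \<Longrightarrow> finite G \<Longrightarrow> F \<inter> G = {} \<Longrightarrow> ssum c (F \<union> G) = ssum c F + ssum c G"
  unfolding ssum_def by (rule sum.union_disjoint)

lemma tot_upper:
  assumes bnd: "\<And>F. finite F \<Longrightarrow> F \<subseteq> A \<Longrightarrow> ssum c F \<le> K"
    and F: "finite F" "F \<subseteq> A"
  shows "ssum c F \<le> tot c A"
  unfolding tot_def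
  by (rule cSUP_upper) (use F bnd in \<open>auto simp: bdd_above_def\<close>)

lemma tot_approx:
  assumes bnd: "\<And>F. finite F \<Longrightarrow> F \<subseteq> A \<Longrightarrow> ssum c F \<le> K"
    and e: "e > 0"
  shows "\<exists>F. finite F \<and> F \<subseteq> A \<and> tot c A - ssum c F < e"
proof (rule ccontr)
  assume nt: "\<not> ?thesis"
  then have "\<And>F. F \<in> {F. finite F \<and> F \<subseteq> A} \<Longrightarrow> ssum c F \<le> tot c A - e"
  proof -
    fix F assume "F \<in> {F. finite F \<and> F \<subseteq> A}"
    then have "\<not> (tot c A - ssum c F < e)" using nt by blast
    then show "ssum c F \<le> tot c A - e" by linarith
  qed
  then have "tot c A \<le> tot c A - e"
    unfolding tot_def[of c A] by (intro cSUP_least) auto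
  with e show False by simp
qed

lemma tot_least:
  assumes "\<And>F. finite F \<Longrightarrow> F \<subseteq> A \<Longrightarrow> ssum c F \<le> K"
  shows "tot c A \<le> K"
  unfolding tot_def using assms by (intro cSUP_least) auto

lemma tot_nonneg:
  assumes bnd: "\<And>F. finite F \<Longrightarrow> F \<subseteq> A \<Longrightarrow> ssum c F \<le> K"
  shows "tot c A \<ge> 0"
proof -
  have "ssum c {} \<le> tot c A" by (rule tot_upper[OF bnd]) auto
  then show ?thesis by (simp add: ssum_def)
qed

lemma ennreal_sq_le:
  fixes x :: ennreal
  assumes "x^2 \<le> ennreal (b^2)" "0 \<le> b"
  shows "x \<le> ennreal b"
proof (cases x)
  case (real r)
  then have "ennreal (r^2) \<le> ennreal (b^2)" using assms by (simp add: ennreal_power)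
  then have "r^2 \<le> b^2" by (simp add: ennreal_le_iff)
  then have "r \<le> b" using assms(2) real by (simp add: power2_le_iff_abs_le)
  then show ?thesis using real by simp
next
  case top
  then show ?thesis using assms by (simp add: top_unique)
qed

lemma l1_l2:
  assumes N: "prob_space N" and h: "sq_integrable N h"
  shows "(\<integral>\<^sup>+x. ennreal (cmod (h x)) \<partial>N)^2 \<le> ennreal (nsq N h)"
proof -
  have [measurable]: "h \<in> borel_measurable N" using h by (simp add: sq_integrable_def)
  have "(\<integral>\<^sup>+x. ennreal (cmod (h x)) * 1 \<partial>N)^2 \<le>
        (\<integral>\<^sup>+x. (ennreal (cmod (h x)))^2 \<partial>N) * (\<integral>\<^sup>+x. 1^2 \<partial>N)"
    by (rule Cauchy_Schwarz_nn_integral) auto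
  also have "(\<integral>\<^sup>+x. 1^2 \<partial>N) = 1"
    using prob_space.emeasure_space_1[OF N] by simp
  also have "(\<integral>\<^sup>+x. (ennreal (cmod (h x)))^2 \<partial>N) = (\<integral>\<^sup>+x. ennreal ((cmod (h x))^2) \<partial>N)"
    by (simp add: ennreal_power)
  also have "\<dots> = ennreal (nsq N h)"
    unfolding nsq_def using h by (intro nn_integral_eq_integral) (auto simp: sq_integrable_def)
  finally show ?thesis by simp
qed


lemma sum_if_sub:
  assumes "finite H" "G \<subseteq> H"
  shows "(\<Sum>i\<in>H. (if i \<in> G then f i else 0)) = (\<Sum>i\<in>G. f i)"
proof -
  have "(\<Sum>i\<in>H. (if i \<in> G then f i else 0)) = sum f (H \<inter> G)"
    using assms(1) by (simp add: sum.inter_restrict)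
  also have "H \<inter> G = G" using assms(2) by auto
  finally show ?thesis .
qed

lemma diff_sums:
  assumes on: "orthonormal N u A" and G: "finite G" "G \<subseteq> A" and F: "finite F" "F \<subseteq> A"
  shows "nsq N (\<lambda>x. (\<Sum>i\<in>G. c i * u i x) - (\<Sum>i\<in>F. c i * u i x)) = ssum c (G - F) + ssum c (F - G)"
proof -
  define d where "d i = (if i \<in> G then c i else 0) - (if i \<in> F then c i else 0)" for i
  have eq: "(\<Sum>i\<in>G. c i * u i x) - (\<Sum>i\<in>F. c i * u i x) = (\<Sum>i\<in>G \<union> F. d i * u i x)" for x
  proof -
    have "(\<Sum>i\<in>G \<union> F. d i * u i x) = (\<Sum>i\<in>G \<union> F. (if i \<in> G then c i * u i x else 0))
        - (\<Sum>i\<in>G \<union> F. (if i \<in> F then c i * u i x else 0))"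
    proof -
      have pt: "\<And>i. d i * u i x = (if i \<in> G then c i * u i x else 0) - (if i \<in> F then c i * u i x else 0)"
        by (auto simp: d_def left_diff_distrib)
      show ?thesis by (simp only: pt sum_subtractf)
    qed
    also have "\<dots> = (\<Sum>i\<in>G. c i * u i x) - (\<Sum>i\<in>F. c i * u i x)"
      using G F by (simp add: sum_if_sub)
    finally show ?thesis by simp
  qed
  have "nsq N (\<lambda>x. (\<Sum>i\<in>G. c i * u i x) - (\<Sum>i\<in>F. c i * u i x)) = nsq N (\<lambda>x. \<Sum>i\<in>G \<union> F. d i * u i x)"
    by (simp add: eq)
  also have "\<dots> = (\<Sum>i\<in>G \<union> F. (cmod (d i))^2)"
    by (rule ortho_sum[OF on]) (use G F in auto)
  also have "\<dots> = (\<Sum>i\<in>(G - F) \<union> (F - G). (cmod (c i))^2)"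
  proof (rule sum.mono_neutral_cong_right)
    show "finite (G \<union> F)" using G F by auto
    show "(G - F) \<union> (F - G) \<subseteq> G \<union> F" by auto
    show "\<forall>i\<in>G \<union> F - ((G - F) \<union> (F - G)). (cmod (d i))^2 = 0" by (auto simp: d_def)
    show "\<And>i. i \<in> (G - F) \<union> (F - G) \<Longrightarrow> (cmod (d i))^2 = (cmod (c i))^2" by (auto simp: d_def)
  qed
  also have "\<dots> = ssum c (G - F) + ssum c (F - G)"
    unfolding ssum_def using G F by (intro sum.union_disjoint) auto
  finally show ?thesis .
qed


lemma sq_int_lin:
  assumes on: "orthonormal N u A" and "H \<subseteq> A"
  shows "sq_integrable N (\<lambda>x. \<Sum>i\<in>H. c i * u i x)"
  using assms unfolding orthonormal_def by (intro sq_int_sum sq_int_scale) auto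

lemma construct:
  assumes N: "prob_space N" and on: "orthonormal N u A"
    and bnd: "\<And>F. finite F \<Longrightarrow> F \<subseteq> A \<Longrightarrow> ssum c F \<le> K"
  shows "\<exists>g. sq_integrable N g \<and> (\<forall>F. finite F \<and> F \<subseteq> A \<longrightarrow>
            nsq N (\<lambda>x. g x - (\<Sum>i\<in>F. c i * u i x)) \<le> tot c A - ssum c F)"
proof -
  define T where "T = tot c A"
  have Tup: "ssum c H \<le> T" if "finite H" "H \<subseteq> A" for H
    unfolding T_def by (rule tot_upper[OF bnd that])
  have "\<forall>j. \<exists>F. finite F \<and> F \<subseteq> A \<and> T - ssum c F < (1/4::real)^j"
    using tot_approx[OF bnd] unfolding T_def by simp
  then obtain phi where phi: "\<And>j. finite (phi j) \<and> phi j \<subseteq> A \<and> T - ssum c (phi j) < (1/4::real)^j"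
    by metis
  define G where "G j = (\<Union>k\<le>j. phi k)" for j
  have Gfin: "finite (G j)" for j unfolding G_def using phi by auto
  have GA: "G j \<subseteq> A" for j unfolding G_def using phi by auto
  have Gmono: "G j \<subseteq> G (Suc j)" for j unfolding G_def by (auto simp: atMost_Suc)
  have Gtail: "T - ssum c (G j) < (1/4::real)^j" for j
  proof -
    have "phi j \<subseteq> G j" unfolding G_def by auto
    then have "ssum c (phi j) \<le> ssum c (G j)" by (rule ssum_mono[OF Gfin])
    then show ?thesis using phi[of j] by linarith
  qed
  have disj_le: "ssum c (H1 - H2) \<le> T - ssum c H2" if "finite H1" "finite H2" "H1 \<subseteq> A" "H2 \<subseteq> A" for H1 H2
  proof -
    have "ssum c ((H1 - H2) \<union> H2) = ssum c (H1 - H2) + ssum c H2"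
      using that by (intro ssum_union) auto
    moreover have "ssum c ((H1 - H2) \<union> H2) \<le> T" using that by (intro Tup) auto
    ultimately show ?thesis by linarith
  qed
  define S where "S j x = (\<Sum>i\<in>G j. c i * u i x)" for j x
  have Ssq: "sq_integrable N (S j)" for j
    unfolding S_def[abs_def] by (rule sq_int_lin[OF on GA])
  have Smeas[measurable]: "S j \<in> borel_measurable N" for j
    using Ssq by (simp add: sq_integrable_def)
  define D where "D j x = S (Suc j) x - S j x" for j x
  have Dsq: "sq_integrable N (D j)" for j
    unfolding D_def[abs_def] by (intro sq_int_diff Ssq)
  have Dmeas[measurable]: "D j \<in> borel_measurable N" for j
    using Dsq by (simp add: sq_integrable_def)
  have nsqD: "nsq N (D j) \<le> ((1/2::real)^j)^2" for j
  proof -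
    have "nsq N (D j) = ssum c (G (Suc j) - G j) + ssum c (G j - G (Suc j))"
      unfolding D_def[abs_def] S_def by (rule diff_sums[OF on Gfin GA Gfin GA])
    also have "G j - G (Suc j) = {}" using Gmono by auto
    also have "ssum c (G (Suc j) - G j) \<le> T - ssum c (G j)"
      by (rule disj_le[OF Gfin Gfin GA GA])
    finally have "nsq N (D j) < (1/4::real)^j" using Gtail[of j] by (simp add: ssum_def)
    also have "(1/4::real)^j = ((1/2::real)^j)^2"
      by (simp add: power2_eq_square power_mult_distrib[symmetric])
    finally show ?thesis by simp
  qed
  have L1D: "(\<integral>\<^sup>+x. ennreal (cmod (D j x)) \<partial>N) \<le> ennreal ((1/2)^j)" for j
  proof (rule ennreal_sq_le)
    have "(\<integral>\<^sup>+x. ennreal (cmod (D j x)) \<partial>N)^2 \<le> ennreal (nsq N (D j))"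
      by (rule l1_l2[OF N Dsq])
    also have "\<dots> \<le> ennreal (((1/2)^j)^2)" using nsqD[of j] by (rule ennreal_leI)
    finally show "(\<integral>\<^sup>+x. ennreal (cmod (D j x)) \<partial>N)^2 \<le> ennreal (((1/2)^j)^2)" .
  qed simp
  have sumfin: "(\<integral>\<^sup>+x. (\<Sum>j. ennreal (cmod (D j x))) \<partial>N) \<noteq> \<infinity>"
  proof -
    have "(\<integral>\<^sup>+x. (\<Sum>j. ennreal (cmod (D j x))) \<partial>N) = (\<Sum>j. \<integral>\<^sup>+x. ennreal (cmod (D j x)) \<partial>N)"
      by (rule nn_integral_suminf) measurable
    also have "\<dots> \<le> (\<Sum>j. ennreal ((1/2)^j))"
      by (intro suminf_le L1D) auto
    also have "\<dots> = ennreal (\<Sum>j. (1/2::real)^j)"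
      by (intro suminf_ennreal2) auto
    finally show ?thesis by (auto simp: top_unique)
  qed
  have AEconv: "AE x in N. convergent (\<lambda>j. S j x)"
  proof -
    have "AE x in N. (\<Sum>j. ennreal (cmod (D j x))) \<noteq> \<infinity>"
      by (rule nn_integral_PInf_AE[OF _ sumfin]) measurable
    then show ?thesis
    proof (rule AE_mp, intro AE_I2 impI)
      fix x assume fin: "(\<Sum>j. ennreal (cmod (D j x))) \<noteq> \<infinity>"
      have "summable (\<lambda>j. cmod (D j x))"
        by (rule summable_suminf_not_top) (use fin in auto)
      then have "summable (\<lambda>j. D j x)" by (rule summable_norm_cancel)
      then have "(\<lambda>n. \<Sum>j<n. D j x) \<longlonglongrightarrow> suminf (\<lambda>j. D j x)" by (rule summable_LIMSEQ)
      then have "(\<lambda>n. S 0 x + (\<Sum>j<n. D j x)) \<longlonglongrightarrow> S 0 x + suminf (\<lambda>j. D j x)"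
        by (intro tendsto_add tendsto_const)
      moreover have "S 0 x + (\<Sum>j<n. D j x) = S n x" for n
        unfolding D_def using sum_lessThan_telescope[of "\<lambda>j. S j x" n] by simp
      ultimately have "(\<lambda>n. S n x) \<longlonglongrightarrow> S 0 x + suminf (\<lambda>j. D j x)" by simp
      then show "convergent (\<lambda>j. S j x)" by (auto simp: convergent_def)
    qed
  qed
  define g where "g x = lim (\<lambda>j. S j x)" for x
  have gmeas[measurable]: "g \<in> borel_measurable N"
    unfolding g_def[abs_def] by measurable
  have AElim: "AE x in N. (\<lambda>j. S j x) \<longlonglongrightarrow> g x"
    using AEconv by eventually_elim (simp add: g_def convergent_LIMSEQ_iff)
  have fatou: "(\<integral>\<^sup>+x. ennreal ((cmod (g x - (\<Sum>i\<in>F. c i * u i x)))^2) \<partial>N) \<le> ennreal (T - ssum c F)"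
    if F: "finite F" "F \<subseteq> A" for F
  proof -
    define SF where "SF x = (\<Sum>i\<in>F. c i * u i x)" for x
    have SFsq: "sq_integrable N SF" unfolding SF_def[abs_def] by (rule sq_int_lin[OF on F(2)])
    have [measurable]: "SF \<in> borel_measurable N" using SFsq by (simp add: sq_integrable_def)
    define v where "v j x = ennreal ((cmod (S j x - SF x))^2)" for j x
    have [measurable]: "v j \<in> borel_measurable N" for j unfolding v_def[abs_def] by measurable
    have "AE x in N. ennreal ((cmod (g x - SF x))^2) = liminf (\<lambda>j. v j x)"
      using AElim
    proof eventually_elim
      case (elim x)
      have "(\<lambda>j. v j x) \<longlonglongrightarrow> ennreal ((cmod (g x - SF x))^2)"
        unfolding v_def by (intro tendsto_ennrealI tendsto_power tendsto_norm tendsto_diff elim tendsto_const)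
      then show ?case by (simp add: lim_imp_Liminf)
    qed
    then have "(\<integral>\<^sup>+x. ennreal ((cmod (g x - SF x))^2) \<partial>N) = (\<integral>\<^sup>+x. liminf (\<lambda>j. v j x) \<partial>N)"
      by (rule nn_integral_cong_AE)
    also have "\<dots> \<le> liminf (\<lambda>j. \<integral>\<^sup>+x. v j x \<partial>N)"
      by (rule nn_integral_liminf) measurable
    also have "\<dots> \<le> liminf (\<lambda>j. ennreal ((T - ssum c F) + (1/4)^j))"
    proof (rule Liminf_mono, intro always_eventually allI)
      fix j
      have sq: "sq_integrable N (\<lambda>x. S j x - SF x)" by (intro sq_int_diff Ssq SFsq)
      have e1: "(\<integral>\<^sup>+x. v j x \<partial>N) = ennreal (nsq N (\<lambda>x. S j x - SF x))"
        unfolding v_def nsq_def using sq by (intro nn_integral_eq_integral) (auto simp: sq_integrable_def)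
      have "nsq N (\<lambda>x. S j x - SF x) = ssum c (G j - F) + ssum c (F - G j)"
        unfolding S_def SF_def by (rule diff_sums[OF on Gfin GA F])
      also have "\<dots> \<le> (T - ssum c F) + (1/4)^j"
        using disj_le[OF Gfin F(1) GA F(2), of j] disj_le[OF F(1) Gfin F(2) GA, of j] Gtail[of j]
        by linarith
      finally have e2: "nsq N (\<lambda>x. S j x - SF x) \<le> (T - ssum c F) + (1/4)^j" .
      show "(\<integral>\<^sup>+x. v j x \<partial>N) \<le> ennreal ((T - ssum c F) + (1/4)^j)"
        unfolding e1 using e2 by (rule ennreal_leI)
    qed
    also have "\<dots> = ennreal (T - ssum c F)"
    proof -
      have "(\<lambda>j. (T - ssum c F) + (1/4::real)^j) \<longlonglongrightarrow> (T - ssum c F) + 0"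
        by (intro tendsto_add tendsto_const LIMSEQ_power_zero) simp
      then have "(\<lambda>j. ennreal ((T - ssum c F) + (1/4::real)^j)) \<longlonglongrightarrow> ennreal (T - ssum c F)"
        by (intro tendsto_ennrealI) simp
      then show ?thesis by (simp add: lim_imp_Liminf)
    qed
    finally show ?thesis unfolding SF_def .
  qed
  have gsq: "sq_integrable N g"
  proof -
    have "(\<integral>\<^sup>+x. ennreal ((cmod (g x))^2) \<partial>N) \<le> ennreal (T - ssum c {})"
      using fatou[of "{}"] by simp
    then have "(\<integral>\<^sup>+x. ennreal (norm ((cmod (g x))^2)) \<partial>N) < \<infinity>"
      by (simp add: order_le_less_trans)
    then have "integrable N (\<lambda>x. (cmod (g x))^2)"
      by (intro integrableI_bounded) measurable
    then show ?thesis by (simp add: sq_integrable_def)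
  qed
  show ?thesis
  proof (intro exI conjI allI impI)
    show "sq_integrable N g" by (rule gsq)
    fix F assume F: "finite F \<and> F \<subseteq> A"
    have sq: "sq_integrable N (\<lambda>x. g x - (\<Sum>i\<in>F. c i * u i x))"
      by (intro sq_int_diff gsq sq_int_lin[OF on]) (use F in auto)
    have "ennreal (nsq N (\<lambda>x. g x - (\<Sum>i\<in>F. c i * u i x))) =
        (\<integral>\<^sup>+x. ennreal ((cmod (g x - (\<Sum>i\<in>F. c i * u i x)))^2) \<partial>N)"
      unfolding nsq_def using sq by (intro nn_integral_eq_integral[symmetric]) (auto simp: sq_integrable_def)
    also have "\<dots> \<le> ennreal (T - ssum c F)" using fatou F by auto
    finally have "ennreal (nsq N (\<lambda>x. g x - (\<Sum>i\<in>F. c i * u i x))) \<le> ennreal (T - ssum c F)" .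
    moreover have "T - ssum c F \<ge> 0" using Tup F by auto
    ultimately show "nsq N (\<lambda>x. g x - (\<Sum>i\<in>F. c i * u i x)) \<le> tot c A - ssum c F"
      unfolding T_def by (simp add: ennreal_le_iff)
  qed
qed


lemma solution_props:
  assumes on: "orthonormal N u A"
    and bnd: "\<And>F. finite F \<Longrightarrow> F \<subseteq> A \<Longrightarrow> ssum c F \<le> K"
    and P: "\<And>F. finite F \<Longrightarrow> F \<subseteq> A \<Longrightarrow> nsq N (\<lambda>x. g x - (\<Sum>i\<in>F. c i * u i x)) \<le> tot c A - ssum c F"
    and gsq: "sq_integrable N g"
  shows "\<And>i. i \<in> A \<Longrightarrow> ip N g (u i) = c i" and "nsq N g = tot c A"
proof -
  define a where "a i = ip N g (u i)" for i
  have key: "(cmod (c i - a i))^2 \<le> tot c A - ssum c F" if F: "finite F" "F \<subseteq> A" "i \<in> F" for F i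
  proof -
    have "nsq N (\<lambda>x. g x - (\<Sum>i\<in>F. c i * u i x)) =
       nsq N g - (\<Sum>i\<in>F. (cmod (a i))^2) + (\<Sum>i\<in>F. (cmod (c i - a i))^2)"
      unfolding a_def by (rule expand[OF on F(1,2) gsq])
    moreover have "(\<Sum>i\<in>F. (cmod (a i))^2) \<le> nsq N g"
      unfolding a_def by (rule bessel[OF on F(1,2) gsq])
    moreover have "(cmod (c i - a i))^2 \<le> (\<Sum>i\<in>F. (cmod (c i - a i))^2)"
      by (rule member_le_sum) (use F in auto)
    ultimately show ?thesis using P[OF F(1,2)] by linarith
  qed
  show coef: "ip N g (u i) = c i" if i: "i \<in> A" for i
  proof -
    have "(cmod (c i - a i))^2 \<le> 0"
    proof (rule field_le_epsilon)
      fix e :: real assume e: "e > 0"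
      obtain F0 where F0: "finite F0" "F0 \<subseteq> A" "tot c A - ssum c F0 < e"
        using tot_approx[OF bnd e] by blast
      have "ssum c F0 \<le> ssum c (insert i F0)" using F0 by (intro ssum_mono) auto
      moreover have "(cmod (c i - a i))^2 \<le> tot c A - ssum c (insert i F0)"
        by (rule key) (use F0 i in auto)
      ultimately show "(cmod (c i - a i))^2 \<le> 0 + e" using F0 by linarith
    qed
    then have "c i - a i = 0" by simp
    then show ?thesis unfolding a_def by simp
  qed
  have nsqF: "nsq N (\<lambda>x. g x - (\<Sum>i\<in>F. c i * u i x)) = nsq N g - ssum c F" if F: "finite F" "F \<subseteq> A" for F
  proof -
    have "nsq N (\<lambda>x. g x - (\<Sum>i\<in>F. c i * u i x)) =
       nsq N g - (\<Sum>i\<in>F. (cmod (ip N g (u i)))^2) + (\<Sum>i\<in>F. (cmod (c i - ip N g (u i)))^2)"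
      by (rule expand[OF on F gsq])
    also have "\<dots> = nsq N g - ssum c F"
      unfolding ssum_def using F coef by (simp add: subset_iff)
    finally show ?thesis .
  qed
  show "nsq N g = tot c A"
  proof (rule antisym)
    show "nsq N g \<le> tot c A"
    proof (rule field_le_epsilon)
      fix e :: real assume e: "e > 0"
      obtain F0 where F0: "finite F0" "F0 \<subseteq> A" "tot c A - ssum c F0 < e"
        using tot_approx[OF bnd e] by blast
      have "nsq N g - ssum c F0 \<le> tot c A - ssum c F0" using nsqF[OF F0(1,2)] P[OF F0(1,2)] by simp
      then show "nsq N g \<le> tot c A + e" using F0 e by linarith
    qed
    show "tot c A \<le> nsq N g"
    proof (rule tot_least)
      fix F assume F: "finite F" "F \<subseteq> A"
      show "ssum c F \<le> nsq N g"
        using nsqF[OF F] nsq_nonneg[of N "\<lambda>x. g x - (\<Sum>i\<in>F. c i * u i x)"] by simp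
    qed
  qed
qed

lemma nsq_zero_AE:
  assumes "sq_integrable N h" "nsq N h \<le> 0"
  shows "AE x in N. h x = 0"
proof -
  have i: "integrable N (\<lambda>x. (cmod (h x))^2)" using assms by (simp add: sq_integrable_def)
  have "nsq N h = 0" using assms(2) nsq_nonneg[of N h] by simp
  then have "AE x in N. (cmod (h x))^2 = 0"
    using integral_nonneg_eq_0_iff_AE[OF i] unfolding nsq_def by simp
  then show ?thesis by simp
qed

lemma nsq_cong_AE:
  assumes "sq_integrable N f" "sq_integrable N g" "AE x in N. f x = g x"
  shows "nsq N f = nsq N g"
  unfolding nsq_def
proof (rule integral_cong_AE)
  show "(\<lambda>x. (cmod (f x))^2) \<in> borel_measurable N" "(\<lambda>x. (cmod (g x))^2) \<in> borel_measurable N"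
    using assms by (auto simp: sq_integrable_def)
  show "AE x in N. (cmod (f x))^2 = (cmod (g x))^2" using assms(3) by auto
qed

lemma nsq3:
  assumes x: "sq_integrable N x" and y: "sq_integrable N y" and z: "sq_integrable N z"
  shows "nsq N (\<lambda>t. x t - a * y t - b * z t) \<le> 3 * (nsq N x + (cmod a)^2 * nsq N y + (cmod b)^2 * nsq N z)"
proof -
  have r: "sq_integrable N (\<lambda>t. x t - a * y t - b * z t)"
    by (intro sq_int_diff sq_int_scale x y z)
  have ix: "integrable N (\<lambda>t. (cmod (x t))^2)" and iy: "integrable N (\<lambda>t. (cmod (y t))^2)"
    and iz: "integrable N (\<lambda>t. (cmod (z t))^2)" using x y z by (auto simp: sq_integrable_def)
  have "nsq N (\<lambda>t. x t - a * y t - b * z t) \<le>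
     (LINT t|N. 3 * ((cmod (x t))^2 + (cmod a)^2 * (cmod (y t))^2 + (cmod b)^2 * (cmod (z t))^2))"
    unfolding nsq_def
  proof (rule integral_mono)
    show "integrable N (\<lambda>t. (cmod (x t - a * y t - b * z t))^2)" using r by (simp add: sq_integrable_def)
    show "integrable N (\<lambda>t. 3 * ((cmod (x t))^2 + (cmod a)^2 * (cmod (y t))^2 + (cmod b)^2 * (cmod (z t))^2))"
      using ix iy iz by auto
    fix t
    define p q r where "p = cmod (x t)" "q = cmod (a * y t)" "r = cmod (b * z t)"
    have h1: "cmod (x t - a * y t - b * z t) \<le> cmod (x t - a * y t) + r"
      unfolding p_q_r_def by (rule norm_triangle_ineq4)
    have h2: "cmod (x t - a * y t) \<le> p + q"
      unfolding p_q_r_def by (rule norm_triangle_ineq4)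
    have "cmod (x t - a * y t - b * z t) \<le> p + q + r" using h1 h2 by linarith
    then have "(cmod (x t - a * y t - b * z t))^2 \<le> (p + q + r)^2"
      by (simp add: power_mono)
    also have "\<dots> \<le> 3 * (p^2 + q^2 + r^2)"
    proof -
      have "0 \<le> (p - q)^2 + (q - r)^2 + (p - r)^2" by simp
      then show ?thesis by (simp add: power2_eq_square algebra_simps)
    qed
    finally show "(cmod (x t - a * y t - b * z t))^2 \<le>
        3 * ((cmod (x t))^2 + (cmod a)^2 * (cmod (y t))^2 + (cmod b)^2 * (cmod (z t))^2)"
      unfolding p_q_r_def by (simp add: norm_mult power_mult_distrib)
  qed
  also have "\<dots> = 3 * (nsq N x + (cmod a)^2 * nsq N y + (cmod b)^2 * nsq N z)"
    unfolding nsq_def using ix iy iz by simp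
  finally show ?thesis .
qed

lemma nsq_two:
  assumes f: "sq_integrable N f" and g: "sq_integrable N g"
  shows "complex_of_real (nsq N (\<lambda>x. a * f x + b * g x)) =
    complex_of_real ((cmod a)^2 * nsq N f + (cmod b)^2 * nsq N g) + a * cnj b * ip N f g + b * cnj a * ip N g f"
proof -
  have af: "sq_integrable N (\<lambda>x. a * f x)" and bg: "sq_integrable N (\<lambda>x. b * g x)"
    using f g by (auto intro: sq_int_scale)
  have s: "sq_integrable N (\<lambda>x. a * f x + b * g x)" by (rule sq_int_add[OF af bg])
  have "complex_of_real (nsq N (\<lambda>x. a * f x + b * g x)) = ip N (\<lambda>x. a * f x + b * g x) (\<lambda>x. a * f x + b * g x)"
    by (simp add: ip_self)
  also have "\<dots> = ip N (\<lambda>x. a * f x) (\<lambda>x. a * f x + b * g x) + ip N (\<lambda>x. b * g x) (\<lambda>x. a * f x + b * g x)"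
    by (rule ip_add_left[OF af bg s])
  also have "\<dots> = (ip N (\<lambda>x. a * f x) (\<lambda>x. a * f x) + ip N (\<lambda>x. a * f x) (\<lambda>x. b * g x))
      + (ip N (\<lambda>x. b * g x) (\<lambda>x. a * f x) + ip N (\<lambda>x. b * g x) (\<lambda>x. b * g x))"
    by (simp add: ip_add_right[OF af bg af] ip_add_right[OF af bg bg])
  also have "\<dots> = a * cnj a * ip N f f + a * cnj b * ip N f g + b * cnj a * ip N g f + b * cnj b * ip N g g"
    by (simp add: ip_scale_left ip_scale_right algebra_simps)
  also have "\<dots> = complex_of_real ((cmod a)^2 * nsq N f + (cmod b)^2 * nsq N g) + a * cnj b * ip N f g + b * cnj a * ip N g f"
  proof -
    have ea: "a * cnj a = complex_of_real ((cmod a)^2)" by (rule cnorm_sq[symmetric])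
    have eb: "b * cnj b = complex_of_real ((cmod b)^2)" by (rule cnorm_sq[symmetric])
    show ?thesis unfolding ea eb ip_self by (simp add: algebra_simps del: of_real_power)
  qed
  finally show ?thesis .
qed


lemma space_bohr: "space bohr_space = bohr_group"
  unfolding bohr_space_def by (auto simp: space_restrict_space space_PiM)

lemma ev_meas_bohr: "(\<lambda>chi. chi l) \<in> borel_measurable bohr_space"
  unfolding bohr_space_def
  by (rule measurable_restrict_space1) (rule measurable_component_singleton, simp)

lemma bohr_facts:
  assumes "bohr_haar MB"
  shows "prob_space MB" "sets MB = sets bohr_space" "space MB = bohr_group"
    "\<And>psi. psi \<in> bohr_group \<Longrightarrow> distr MB MB (\<lambda>chi x. psi x * chi x) = MB"
  using assms unfolding bohr_haar_def by auto

lemma ev_meas: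
  assumes "bohr_haar MB"
  shows "(\<lambda>chi. chi l) \<in> borel_measurable MB"
proof -
  have eq: "measurable MB borel = measurable bohr_space borel"
    by (rule measurable_cong_sets) (simp_all add: bohr_facts[OF assms])
  show ?thesis unfolding eq by (rule ev_meas_bohr)
qed

lemma bohr_group_mult:
  assumes "psi \<in> bohr_group" "chi \<in> bohr_group"
  shows "(\<lambda>x. psi x * chi x) \<in> bohr_group"
  using assms unfolding bohr_group_def by (simp add: norm_mult)

lemma transl_meas:
  assumes "bohr_haar MB" and psi: "psi \<in> bohr_group"
  shows "(\<lambda>chi x. psi x * chi x) \<in> measurable MB MB"
proof -
  have "measurable MB MB = measurable bohr_space bohr_space"
    by (rule measurable_cong_sets) (simp_all add: bohr_facts[OF assms(1)])
  moreover have "(\<lambda>chi x. psi x * chi x) \<in> measurable bohr_space bohr_space"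
    unfolding bohr_space_def[of]
  proof (rule measurable_restrict_space2)
    show "(\<lambda>chi x. psi x * chi x) \<in> space (restrict_space (Pi\<^sub>M UNIV (\<lambda>_. borel)) bohr_group) \<rightarrow> bohr_group"
      using bohr_group_mult[OF psi] by (auto simp: space_restrict_space)
    show "(\<lambda>chi x. psi x * chi x) \<in> restrict_space (Pi\<^sub>M UNIV (\<lambda>_. borel)) bohr_group \<rightarrow>\<^sub>M Pi\<^sub>M UNIV (\<lambda>_. borel)"
    proof (rule measurable_PiM_single')
      fix x :: "real^'a"
      have "(\<lambda>chi. chi x) \<in> borel_measurable (restrict_space (Pi\<^sub>M UNIV (\<lambda>_. borel)) bohr_group)"
        using ev_meas_bohr unfolding bohr_space_def .
      then show "(\<lambda>chi. psi x * chi x) \<in> borel_measurable (restrict_space (Pi\<^sub>M UNIV (\<lambda>_. borel)) bohr_group)"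
        by measurable
    qed auto
  qed
  ultimately show ?thesis by simp
qed

lemma bohr_hom:
  assumes "chi \<in> bohr_group"
  shows "chi (x + y) = chi x * chi y" "cmod (chi x) = 1"
  using assms unfolding bohr_group_def by auto

lemma bohr_char_props:
  assumes "chi \<in> bohr_group"
  shows "cmod (chi l) = 1" "chi l * cnj (chi l') = chi (l - l')"
proof -
  show n: "cmod (chi l) = 1" by (rule bohr_hom(2)[OF assms])
  have "chi ((l - l') + l') = chi (l - l') * chi l'" by (rule bohr_hom(1)[OF assms])
  then have e: "chi l = chi (l - l') * chi l'" by simp
  have "chi l' * cnj (chi l') = complex_of_real ((cmod (chi l'))^2)" by (rule cnorm_sq[symmetric])
  also have "\<dots> = 1" using bohr_hom(2)[OF assms, of l'] by simp
  finally have "chi l' * cnj (chi l') = 1" .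
  then show "chi l * cnj (chi l') = chi (l - l')"
    unfolding e by (simp add: mult.assoc)
qed

lemma bohr_zero:
  assumes "chi \<in> bohr_group"
  shows "chi 0 = 1"
proof -
  have "chi (0 + 0) = chi 0 * chi 0" by (rule bohr_hom(1)[OF assms])
  then have e: "chi 0 * chi 0 = chi 0 * 1" by simp
  have "cmod (chi 0) = 1" by (rule bohr_hom(2)[OF assms])
  then have "chi 0 \<noteq> 0" by auto
  with e show ?thesis using mult_left_cancel[of "chi 0" "chi 0" 1] by blast
qed

lemma haar_zero:
  assumes MB: "bohr_haar MB" and d: "d \<noteq> 0"
  shows "(LINT chi|MB. chi d) = 0"
proof -
  define s where "s = (1 / (2 * (d \<bullet> d))) *\<^sub>R d"
  have dd: "d \<bullet> d \<noteq> 0" using d by simp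
  have sd: "s \<bullet> d = 1/2" unfolding s_def using dd by simp
  define psi where "psi x = cis (2 * pi * (s \<bullet> x))" for x :: "real^'a"
  have psi: "psi \<in> bohr_group"
    unfolding bohr_group_def psi_def by (simp add: inner_add_right distrib_left cis_mult)
  have psid: "psi d = -1" unfolding psi_def sd by simp
  have "(LINT chi|MB. chi d) = (LINT chi|distr MB MB (\<lambda>chi x. psi x * chi x). chi d)"
    using bohr_facts(4)[OF MB psi] by simp
  also have "\<dots> = (LINT chi|MB. psi d * chi d)"
    by (rule integral_distr[OF transl_meas[OF MB psi] ev_meas[OF MB]])
  also have "\<dots> = - (LINT chi|MB. chi d)" by (simp add: psid)
  finally show ?thesis by simp
qed

lemma ev_sq_int:
  assumes MB: "bohr_haar MB"
  shows "sq_integrable MB (\<lambda>chi. chi l)"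
proof -
  interpret prob_space MB using bohr_facts[OF MB] by simp
  have "integrable MB (\<lambda>chi. (cmod (chi l))^2) = integrable MB (\<lambda>chi. 1::real)"
    by (rule Bochner_Integration.integrable_cong)
       (auto simp: bohr_facts(3)[OF MB] bohr_char_props)
  then show ?thesis using ev_meas[OF MB] by (simp add: sq_integrable_def)
qed

lemma bohr_orthonormal:
  assumes MB: "bohr_haar MB"
  shows "orthonormal MB (\<lambda>l chi. chi l) A"
  unfolding orthonormal_def
proof (intro conjI ballI)
  interpret prob_space MB using bohr_facts[OF MB] by simp
  fix i assume "i \<in> A" show "sq_integrable MB (\<lambda>chi. chi i)" by (rule ev_sq_int[OF MB])
next
  interpret prob_space MB using bohr_facts[OF MB] by simp
  fix i j assume "i \<in> A" "j \<in> A"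
  have "ip MB (\<lambda>chi. chi i) (\<lambda>chi. chi j) = (LINT chi|MB. chi (i - j))"
    unfolding ip_def
    by (rule Bochner_Integration.integral_cong) (auto simp: bohr_facts(3)[OF MB] bohr_char_props)
  also have "\<dots> = (if i = j then 1 else 0)"
  proof (cases "i = j")
    case True
    have "(LINT chi|MB. chi (i - j)) = (LINT chi|MB. 1)"
      by (rule Bochner_Integration.integral_cong)
         (auto simp: bohr_facts(3)[OF MB] True bohr_zero)
    then show ?thesis using True prob_space.prob_space[OF bohr_facts(1)[OF MB]] by simp
  next
    case False then show ?thesis using haar_zero[OF MB, of "i - j"] by simp
  qed
  finally show "ip MB (\<lambda>chi. chi i) (\<lambda>chi. chi j) = (if i = j then 1 else 0)" .
qed


lemma expo_norm: "cmod (expo l x) = 1" by (simp add: expo_def)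

lemma expo_prod: "expo l x * cnj (expo l' x) = cis (2 * pi * ((l - l') \<bullet> x))"
  unfolding expo_def by (simp add: cis_cnj cis_mult inner_diff_left algebra_simps)

lemma expo_meas:
  assumes "sets mu = sets borel"
  shows "expo l \<in> borel_measurable mu"
proof -
  have eq: "measurable mu borel = measurable borel (borel :: complex measure)"
    by (rule measurable_cong_sets) (simp_all add: assms)
  have "continuous_on UNIV (expo l)" unfolding expo_def by (intro continuous_intros)
  then show ?thesis unfolding eq by (rule borel_measurable_continuous_onI)
qed

lemma expo_sq:
  assumes "prob_space mu" "sets mu = sets borel"
  shows "sq_integrable mu (expo l)"
proof -
  interpret prob_space mu by fact
  show ?thesis using expo_meas[OF assms(2)] by (simp add: sq_integrable_def expo_norm)
qed

lemma ip_expo: "ip mu (expo t) (expo l) = fourier_meas mu (t - l)"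
  unfolding ip_def fourier_meas_def expo_prod ..

lemma fourier_zero:
  assumes "prob_space mu"
  shows "fourier_meas mu 0 = 1"
proof -
  interpret prob_space mu by fact
  show ?thesis unfolding fourier_meas_def by (simp add: prob_space)
qed

lemma nn_count_le1:
  fixes g :: "'i \<Rightarrow> real"
  assumes nn: "\<And>x. g x \<ge> 0"
  shows "(\<integral>\<^sup>+ l. ennreal (g l) \<partial>count_space A) \<le> 1 \<longleftrightarrow> (\<forall>F. finite F \<and> F \<subseteq> A \<longrightarrow> sum g F \<le> 1)"
proof
  assume le: "(\<integral>\<^sup>+ l. ennreal (g l) \<partial>count_space A) \<le> 1"
  show "\<forall>F. finite F \<and> F \<subseteq> A \<longrightarrow> sum g F \<le> 1"
  proof (intro allI impI)
    fix F assume F: "finite F \<and> F \<subseteq> A"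
    have "(\<integral>\<^sup>+ l. ennreal (g l) * indicator F l \<partial>count_space A) = (\<Sum>l\<in>F. ennreal (g l) * indicator F l)"
      by (rule nn_integral_count_space') (use F in auto)
    also have "\<dots> = ennreal (sum g F)" using nn by (simp add: sum_ennreal)
    finally have e: "(\<integral>\<^sup>+ l. ennreal (g l) * indicator F l \<partial>count_space A) = ennreal (sum g F)" .
    have "(\<integral>\<^sup>+ l. ennreal (g l) * indicator F l \<partial>count_space A) \<le> (\<integral>\<^sup>+ l. ennreal (g l) \<partial>count_space A)"
      by (intro nn_integral_mono) (auto simp: indicator_def)
    then have "ennreal (sum g F) \<le> (\<integral>\<^sup>+ l. ennreal (g l) \<partial>count_space A)" unfolding e .
    with le have "ennreal (sum g F) \<le> 1" by (metis order_trans)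
    then show "sum g F \<le> 1" by simp
  qed
next
  assume H: "\<forall>F. finite F \<and> F \<subseteq> A \<longrightarrow> sum g F \<le> 1"
  have as: "Infinite_Set_Sum.abs_summable_on g A"
    by (rule abs_summable_finite_sumsI[where B=1]) (use H nn in auto)
  have "(\<integral>\<^sup>+ l. ennreal (g l) \<partial>count_space A) = ennreal (infsetsum g A)"
    by (rule nn_integral_conv_infsetsum[OF as]) (use nn in auto)
  also have "\<dots> = (SUP F\<in>{F. finite F \<and> F \<subseteq> A}. ennreal (sum g F))"
    by (rule infsetsum_nonneg_is_SUPREMUM_ennreal[OF as]) (use nn in auto)
  also have "\<dots> \<le> 1" using H by (intro SUP_least) auto
  finally show "(\<integral>\<^sup>+ l. ennreal (g l) \<partial>count_space A) \<le> 1" .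
qed


lemma on_iff:
  fixes mu :: "(real^'n) measure"
  assumes P: "prob_space mu" and S: "sets mu = sets borel"
  shows "(\<forall>l\<in>Lam. \<forall>l'\<in>Lam. l \<noteq> l' \<longrightarrow> (LINT x|mu. expo l x * cnj (expo l' x)) = 0)
     \<longleftrightarrow> orthonormal mu expo Lam"
proof
  assume H: "\<forall>l\<in>Lam. \<forall>l'\<in>Lam. l \<noteq> l' \<longrightarrow> (LINT x|mu. expo l x * cnj (expo l' x)) = 0"
  show "orthonormal mu expo Lam"
    unfolding orthonormal_def
  proof (intro conjI ballI)
    fix i assume "i \<in> Lam" show "sq_integrable mu (expo i)" by (rule expo_sq[OF P S])
  next
    fix i j assume ij: "i \<in> Lam" "j \<in> Lam"
    show "ip mu (expo i) (expo j) = (if i = j then 1 else 0)"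
    proof (cases "i = j")
      case True then show ?thesis using ip_expo[of mu i j] fourier_zero[OF P] by simp
    next
      case False then show ?thesis using H ij by (simp add: ip_def)
    qed
  qed
next
  assume "orthonormal mu expo Lam"
  then show "\<forall>l\<in>Lam. \<forall>l'\<in>Lam. l \<noteq> l' \<longrightarrow> (LINT x|mu. expo l x * cnj (expo l' x)) = 0"
    unfolding orthonormal_def ip_def by auto
qed

lemma nsq_expo:
  assumes P: "prob_space mu"
  shows "nsq mu (expo l) = 1"
proof -
  interpret prob_space mu by fact
  show ?thesis unfolding nsq_def by (simp add: expo_norm prob_space)
qed

theorem part_iii:
  fixes mu :: "(real^'n) measure" and Lam :: "(real^'n) set"
  assumes P: "prob_space mu" and S: "sets mu = sets borel"
  shows "(\<forall>l\<in>Lam. \<forall>l'\<in>Lam. l \<noteq> l' \<longrightarrow> (LINT x|mu. expo l x * cnj (expo l' x)) = 0)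
     \<longleftrightarrow> (\<forall>t. (\<integral>\<^sup>+ l. ennreal ((cmod (fourier_meas mu (t - l)))^2) \<partial>count_space Lam) \<le> 1)"
proof
  assume H: "\<forall>l\<in>Lam. \<forall>l'\<in>Lam. l \<noteq> l' \<longrightarrow> (LINT x|mu. expo l x * cnj (expo l' x)) = 0"
  then have on: "orthonormal mu expo Lam" using on_iff[OF P S] by blast
  show "\<forall>t. (\<integral>\<^sup>+ l. ennreal ((cmod (fourier_meas mu (t - l)))^2) \<partial>count_space Lam) \<le> 1"
  proof
    fix t
    show "(\<integral>\<^sup>+ l. ennreal ((cmod (fourier_meas mu (t - l)))^2) \<partial>count_space Lam) \<le> 1"
    proof (subst nn_count_le1, simp, intro allI impI)
      fix F assume F: "finite F \<and> F \<subseteq> Lam"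
      have "(\<Sum>l\<in>F. (cmod (fourier_meas mu (t - l)))^2) = (\<Sum>l\<in>F. (cmod (ip mu (expo t) (expo l)))^2)"
        by (simp add: ip_expo)
      also have "\<dots> \<le> nsq mu (expo t)"
        by (rule bessel[OF on _ _ expo_sq[OF P S]]) (use F in auto)
      also have "\<dots> = 1" by (rule nsq_expo[OF P])
      finally show "(\<Sum>l\<in>F. (cmod (fourier_meas mu (t - l)))^2) \<le> 1" .
    qed
  qed
next
  assume H: "\<forall>t. (\<integral>\<^sup>+ l. ennreal ((cmod (fourier_meas mu (t - l)))^2) \<partial>count_space Lam) \<le> 1"
  show "\<forall>l\<in>Lam. \<forall>l'\<in>Lam. l \<noteq> l' \<longrightarrow> (LINT x|mu. expo l x * cnj (expo l' x)) = 0"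
  proof (intro ballI impI)
    fix l l' assume l: "l \<in> Lam" "l' \<in> Lam" "l \<noteq> l'"
    have X: "\<forall>F. finite F \<and> F \<subseteq> Lam \<longrightarrow> (\<Sum>k\<in>F. (cmod (fourier_meas mu (l - k)))^2) \<le> 1"
      using H[rule_format, of l] nn_count_le1[of "\<lambda>k. (cmod (fourier_meas mu (l - k)))^2" Lam] by simp
    have "(\<Sum>k\<in>{l, l'}. (cmod (fourier_meas mu (l - k)))^2) \<le> 1"
      using X[rule_format, of "{l, l'}"] l by blast
    then have "(cmod (fourier_meas mu (l - l)))^2 + (cmod (fourier_meas mu (l - l')))^2 \<le> 1"
      using l by simp
    then have "(cmod (fourier_meas mu (l - l')))^2 \<le> 0" using fourier_zero[OF P] by simp
    then have "fourier_meas mu (l - l') = 0" by simp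
    then show "(LINT x|mu. expo l x * cnj (expo l' x)) = 0"
      using ip_expo[of mu l l'] by (simp add: ip_def)
  qed
qed


lemma trig_in_span:
  fixes mu :: "(real^'n) measure"
  assumes P: "prob_space mu" and S: "sets mu = sets borel" and F: "finite F" "F \<subseteq> Lam"
  shows "(\<lambda>x. \<Sum>l\<in>F. c l * expo l x) \<in> closed_span mu Lam"
  unfolding closed_span_def
proof (intro CollectI conjI allI impI)
  show "sq_integrable mu (\<lambda>x. \<Sum>l\<in>F. c l * expo l x)"
    by (intro sq_int_sum sq_int_scale expo_sq[OF P S])
  fix e :: real assume e: "e > 0"
  have "(\<lambda>x. \<Sum>l\<in>F. c l * expo l x) \<in> trig_polys Lam"
    unfolding trig_polys_def using F by blast
  moreover have "L2_norm mu (\<lambda>x. (\<Sum>l\<in>F. c l * expo l x) - (\<Sum>l\<in>F. c l * expo l x)) < e"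
    using e by (simp add: L2_norm_def)
  ultimately show "\<exists>p\<in>trig_polys Lam. L2_norm mu (\<lambda>x. (\<Sum>l\<in>F. c l * expo l x) - p x) < e"
    by (intro bexI[of _ "\<lambda>x. \<Sum>l\<in>F. c l * expo l x"]) simp_all
qed

lemma expo_in_span:
  fixes mu :: "(real^'n) measure"
  assumes P: "prob_space mu" and S: "sets mu = sets borel" and l: "l \<in> Lam"
  shows "expo l \<in> closed_span mu Lam"
  using trig_in_span[OF P S, of "{l}" Lam "\<lambda>_. 1"] l by simp

lemma parseval:
  fixes mu :: "(real^'n) measure"
  assumes on: "orthonormal mu expo Lam" and f: "f \<in> closed_span mu Lam"
  shows "tot (\<lambda>i. ip mu f (expo i)) Lam = nsq mu f"
proof -
  define c where "c i = ip mu f (expo i)" for i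
  have fsq: "sq_integrable mu f" using f by (simp add: closed_span_def)
  have bnd: "ssum c F \<le> nsq mu f" if "finite F" "F \<subseteq> Lam" for F
    unfolding ssum_def c_def by (rule bessel[OF on that fsq])
  have "tot c Lam \<le> nsq mu f" by (rule tot_least[OF bnd])
  moreover have "nsq mu f \<le> tot c Lam"
  proof (rule field_le_epsilon)
    fix e :: real assume e: "e > 0"
    obtain p where p: "p \<in> trig_polys Lam" "L2_norm mu (\<lambda>x. f x - p x) < sqrt e"
      using f \<open>e > 0\<close> real_sqrt_gt_zero[of e] unfolding closed_span_def by blast
    then obtain F d where F: "finite F" "F \<subseteq> Lam" and pd: "p = (\<lambda>x. \<Sum>l\<in>F. d l * expo l x)"
      unfolding trig_polys_def by blast
    have "sqrt (nsq mu (\<lambda>x. f x - p x)) < sqrt e" using p(2) by (simp add: L2_norm_nsq)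
    then have lt: "nsq mu (\<lambda>x. f x - p x) < e" by simp
    have "nsq mu (\<lambda>x. f x - p x) = nsq mu f - ssum c F + (\<Sum>i\<in>F. (cmod (d i - c i))^2)"
      unfolding pd ssum_def c_def by (rule expand[OF on F fsq])
    moreover have "(\<Sum>i\<in>F. (cmod (d i - c i))^2) \<ge> 0" by (simp add: sum_nonneg)
    moreover have "ssum c F \<le> tot c Lam" by (rule tot_upper[OF bnd F])
    ultimately show "nsq mu f \<le> tot c Lam + e" using lt by linarith
  qed
  ultimately show ?thesis unfolding c_def by simp
qed


lemma ii_imp_i:
  fixes mu :: "(real^'n) measure" and Lam :: "(real^'n) set"
    and MB :: "(real^'n \<Rightarrow> complex) measure"
  assumes P: "prob_space mu" and S: "sets mu = sets borel" and MB: "bohr_haar MB"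
    and W1: "\<forall>f\<in>closed_span mu Lam. sq_integrable MB (W f)"
    and W2: "\<forall>f\<in>closed_span mu Lam. \<forall>g\<in>closed_span mu Lam. \<forall>a b.
                  AE chi in MB. W (\<lambda>x. a * f x + b * g x) chi = a * W f chi + b * W g chi"
    and W3: "\<forall>f\<in>closed_span mu Lam. L2_norm MB (W f) = L2_norm mu f"
    and W4: "\<forall>l\<in>Lam. AE chi in MB. W (expo l) chi = chi l"
  shows "\<forall>l\<in>Lam. \<forall>l'\<in>Lam. l \<noteq> l' \<longrightarrow> (LINT x|mu. expo l x * cnj (expo l' x)) = 0"
proof (intro ballI impI)
  fix l l' assume l: "l \<in> Lam" "l' \<in> Lam" "l \<noteq> l'"
  define z where "z = ip mu (expo l) (expo l')"
  have onMB: "orthonormal MB (\<lambda>l chi. chi l) Lam" by (rule bohr_orthonormal[OF MB])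
  have fs: "expo l \<in> closed_span mu Lam" "expo l' \<in> closed_span mu Lam"
    using expo_in_span[OF P S] l by auto
  define h where "h = (\<lambda>x. 1 * expo l x + z * expo l' x)"
  have hs: "h \<in> closed_span mu Lam"
  proof -
    have "(\<lambda>x. \<Sum>k\<in>{l, l'}. (if k = l then 1 else z) * expo k x) \<in> closed_span mu Lam"
      by (rule trig_in_span[OF P S]) (use l in auto)
    moreover have "(\<lambda>x. \<Sum>k\<in>{l, l'}. (if k = l then 1 else z) * expo k x) = h"
      unfolding h_def using l by (auto simp: fun_eq_iff)
    ultimately show ?thesis by simp
  qed
  have hsq: "sq_integrable mu h" using hs by (simp add: closed_span_def)
  have Whsq: "sq_integrable MB (W h)" using W1 hs by auto
  have e1: "nsq MB (W h) = nsq mu h"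
    using W3 hs by (simp add: L2_norm_nsq nsq_nonneg)
  have ev: "sq_integrable MB (\<lambda>chi. chi k)" for k by (rule ev_sq_int[OF MB])
  have tsq: "sq_integrable MB (\<lambda>chi. 1 * chi l + z * chi l')"
    by (intro sq_int_add sq_int_scale ev)
  have "AE chi in MB. W h chi = 1 * chi l + z * chi l'"
    using W2[rule_format, OF fs(1) fs(2), of 1 z] W4[rule_format, OF l(1)] W4[rule_format, OF l(2)]
    unfolding h_def by eventually_elim simp
  then have e2: "nsq MB (W h) = nsq MB (\<lambda>chi. 1 * chi l + z * chi l')"
    by (rule nsq_cong_AE[OF Whsq tsq])
  have ipMB: "ip MB (\<lambda>chi. chi i) (\<lambda>chi. chi j) = (if i = j then 1 else 0)" if "i \<in> Lam" "j \<in> Lam" for i j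
    using onMB that unfolding orthonormal_def by blast
  have nMB: "nsq MB (\<lambda>chi. chi i) = 1" if "i \<in> Lam" for i
    using ipMB[OF that that] ip_self[of MB "\<lambda>chi. chi i"] by simp
  have onmu: "ip mu (expo l') (expo l) = cnj z" unfolding z_def by (rule ip_cnj)
  have A: "complex_of_real (nsq MB (\<lambda>chi. 1 * chi l + z * chi l')) = complex_of_real (1 + (cmod z)^2)"
    using nsq_two[OF ev[of l] ev[of l'], where a=1 and b=z] ipMB[OF l(1) l(2)] ipMB[OF l(2) l(1)] nMB[OF l(1)] nMB[OF l(2)] l(3)
    by simp
  have B: "complex_of_real (nsq mu h) = complex_of_real (1 + (cmod z)^2) + cnj z * z + z * cnj z"
    unfolding h_def
    using nsq_two[OF expo_sq[OF P S, of l] expo_sq[OF P S, of l'], where a=1 and b=z] nsq_expo[OF P, of l] nsq_expo[OF P, of l'] onmu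
    by (simp add: z_def)
  have "cnj z * z + z * cnj z = 0" using A B e1 e2 by simp
  then have "complex_of_real (2 * (cmod z)^2) = 0" by (simp add: cnorm_sq[symmetric] mult.commute del: of_real_power)
  then have "z = 0" by simp
  then show "(LINT x|mu. expo l x * cnj (expo l' x)) = 0" unfolding z_def ip_def .
qed

lemma i_imp_ii:
  fixes mu :: "(real^'n) measure" and Lam :: "(real^'n) set"
    and MB :: "(real^'n \<Rightarrow> complex) measure"
  assumes P: "prob_space mu" and S: "sets mu = sets borel" and MB: "bohr_haar MB"
    and on: "orthonormal mu expo Lam"
  shows "\<exists>W :: (real^'n \<Rightarrow> complex) \<Rightarrow> ((real^'n \<Rightarrow> complex) \<Rightarrow> complex).
              (\<forall>f\<in>closed_span mu Lam. sq_integrable MB (W f)) \<and>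
              (\<forall>f\<in>closed_span mu Lam. \<forall>g\<in>closed_span mu Lam. \<forall>a b.
                  AE chi in MB. W (\<lambda>x. a * f x + b * g x) chi = a * W f chi + b * W g chi) \<and>
              (\<forall>f\<in>closed_span mu Lam. L2_norm MB (W f) = L2_norm mu f) \<and>
              (\<forall>l\<in>Lam. AE chi in MB. W (expo l) chi = chi l)"
proof -
  have NP: "prob_space MB" by (rule bohr_facts(1)[OF MB])
  have onMB: "orthonormal MB (\<lambda>l chi. chi l) Lam" by (rule bohr_orthonormal[OF MB])
  define c where "c f i = ip mu f (expo i)" for f :: "real^'n \<Rightarrow> complex" and i
  define Pr where "Pr f g \<longleftrightarrow> sq_integrable MB g \<and> (\<forall>F. finite F \<and> F \<subseteq> Lam \<longrightarrow>
     nsq MB (\<lambda>x. g x - (\<Sum>i\<in>F. c f i * x i)) \<le> tot (c f) Lam - ssum (c f) F)" for f g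
  define W where "W f = (SOME g. Pr f g)" for f
  have bnd: "ssum (c f) F \<le> nsq mu f" if "sq_integrable mu f" "finite F" "F \<subseteq> Lam" for f F
    unfolding ssum_def c_def by (rule bessel[OF on that(2,3,1)])
  have WP: "Pr f (W f)" if fsq: "sq_integrable mu f" for f
  proof -
    have "\<exists>g. Pr f g"
      unfolding Pr_def using construct[OF NP onMB, of "c f" "nsq mu f"] bnd[OF fsq] by simp
    then show ?thesis unfolding W_def by (rule someI_ex)
  qed
  have Wsq: "sq_integrable MB (W f)" if "sq_integrable mu f" for f
    using WP[OF that] by (simp add: Pr_def)
  have Wtail: "nsq MB (\<lambda>x. W f x - (\<Sum>i\<in>F. c f i * x i)) \<le> tot (c f) Lam - ssum (c f) F"
    if "sq_integrable mu f" "finite F" "F \<subseteq> Lam" for f F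
    using WP[OF that(1)] that(2,3) by (simp add: Pr_def)
  have Wnsq: "nsq MB (W f) = tot (c f) Lam" if fsq: "sq_integrable mu f" for f
    by (rule solution_props(2)[OF onMB bnd[OF fsq] Wtail[OF fsq] Wsq[OF fsq]])
  have span_sq: "sq_integrable mu f" if "f \<in> closed_span mu Lam" for f
    using that by (simp add: closed_span_def)
  show ?thesis
  proof (intro exI conjI ballI allI)
    fix f assume f: "f \<in> closed_span mu Lam"
    show "sq_integrable MB (W f)" by (rule Wsq[OF span_sq[OF f]])
    show "L2_norm MB (W f) = L2_norm mu f"
      unfolding L2_norm_nsq Wnsq[OF span_sq[OF f]] c_def parseval[OF on f] ..
  next
    fix l assume l: "l \<in> Lam"
    have esq: "sq_integrable mu (expo l)" by (rule expo_sq[OF P S])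
    have cl: "c (expo l) i = (if i = l then 1 else 0)" if "i \<in> Lam" for i
      using on l that unfolding orthonormal_def c_def by auto
    have "nsq MB (\<lambda>x. W (expo l) x - (\<Sum>i\<in>{l}. c (expo l) i * x i)) \<le> tot (c (expo l)) Lam - ssum (c (expo l)) {l}"
      by (rule Wtail[OF esq]) (use l in auto)
    moreover have "tot (c (expo l)) Lam = 1"
      unfolding c_def parseval[OF on expo_in_span[OF P S l]] by (rule nsq_expo[OF P])
    moreover have "ssum (c (expo l)) {l} = 1" using cl[OF l] by (simp add: ssum_def)
    ultimately have "nsq MB (\<lambda>x. W (expo l) x - x l) \<le> 0" using cl[OF l] by simp
    then have "AE x in MB. W (expo l) x - x l = 0"
      by (rule nsq_zero_AE[rotated]) (intro sq_int_diff Wsq[OF esq] ev_sq_int[OF MB])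
    then show "AE chi in MB. W (expo l) chi = chi l" by simp
  next
    fix f g a b assume f: "f \<in> closed_span mu Lam" and g: "g \<in> closed_span mu Lam"
    have fsq: "sq_integrable mu f" and gsq: "sq_integrable mu g" using f g span_sq by auto
    define h where "h = (\<lambda>x. a * f x + b * g x)"
    have hsq: "sq_integrable mu h" unfolding h_def by (intro sq_int_add sq_int_scale fsq gsq)
    have ch: "c h i = a * c f i + b * c g i" for i
      unfolding h_def c_def
      by (simp add: ip_add_left[OF sq_int_scale[OF fsq] sq_int_scale[OF gsq] expo_sq[OF P S]] ip_scale_left)
    define r where "r x = W h x - (a * W f x + b * W g x)" for x
    have rsq: "sq_integrable MB r"
      unfolding r_def[abs_def] by (intro sq_int_diff sq_int_add sq_int_scale Wsq fsq gsq hsq)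
    have "nsq MB r \<le> 0"
    proof (rule field_le_epsilon)
      fix e :: real assume e: "e > 0"
      define K where "K = 3 * (1 + (cmod a)^2 + (cmod b)^2)"
      have K: "K > 0" unfolding K_def by (simp add: add_pos_nonneg)
      define d where "d = e / K"
      have d: "d > 0" unfolding d_def using e K by simp
      obtain F1 where F1: "finite F1" "F1 \<subseteq> Lam" "tot (c h) Lam - ssum (c h) F1 < d"
        using tot_approx[OF bnd[OF hsq] d] by blast
      obtain F2 where F2: "finite F2" "F2 \<subseteq> Lam" "tot (c f) Lam - ssum (c f) F2 < d"
        using tot_approx[OF bnd[OF fsq] d] by blast
      obtain F3 where F3: "finite F3" "F3 \<subseteq> Lam" "tot (c g) Lam - ssum (c g) F3 < d"
        using tot_approx[OF bnd[OF gsq] d] by blast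
      define F where "F = F1 \<union> F2 \<union> F3"
      have F: "finite F" "F \<subseteq> Lam" unfolding F_def using F1 F2 F3 by auto
      have th: "nsq MB (\<lambda>x. W h x - (\<Sum>i\<in>F. c h i * x i)) \<le> d"
      proof -
        have "ssum (c h) F1 \<le> ssum (c h) F" unfolding F_def by (intro ssum_mono) (use F in \<open>auto simp: F_def\<close>)
        then show ?thesis using Wtail[OF hsq F] F1 by linarith
      qed
      have tf: "nsq MB (\<lambda>x. W f x - (\<Sum>i\<in>F. c f i * x i)) \<le> d"
      proof -
        have "ssum (c f) F2 \<le> ssum (c f) F" unfolding F_def by (intro ssum_mono) (use F in \<open>auto simp: F_def\<close>)
        then show ?thesis using Wtail[OF fsq F] F2 by linarith
      qed
      have tg: "nsq MB (\<lambda>x. W g x - (\<Sum>i\<in>F. c g i * x i)) \<le> d"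
      proof -
        have "ssum (c g) F3 \<le> ssum (c g) F" unfolding F_def by (intro ssum_mono) (use F in \<open>auto simp: F_def\<close>)
        then show ?thesis using Wtail[OF gsq F] F3 by linarith
      qed
      have sqx: "sq_integrable MB (\<lambda>x. W k x - (\<Sum>i\<in>F. c k i * x i))" if "sq_integrable mu k" for k
        by (intro sq_int_diff Wsq[OF that] sq_int_lin[OF onMB F(2)])
      have req: "r = (\<lambda>x. (W h x - (\<Sum>i\<in>F. c h i * x i)) - a * (W f x - (\<Sum>i\<in>F. c f i * x i))
                   - b * (W g x - (\<Sum>i\<in>F. c g i * x i)))"
      proof
        fix x :: "real^'n \<Rightarrow> complex"
        have "(\<Sum>i\<in>F. c h i * x i) = a * (\<Sum>i\<in>F. c f i * x i) + b * (\<Sum>i\<in>F. c g i * x i)"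
          by (simp add: ch sum_distrib_left sum.distrib algebra_simps)
        then show "r x = (W h x - (\<Sum>i\<in>F. c h i * x i)) - a * (W f x - (\<Sum>i\<in>F. c f i * x i))
                   - b * (W g x - (\<Sum>i\<in>F. c g i * x i))"
          unfolding r_def by (simp add: algebra_simps)
      qed
      have "nsq MB r \<le> 3 * (nsq MB (\<lambda>x. W h x - (\<Sum>i\<in>F. c h i * x i))
          + (cmod a)^2 * nsq MB (\<lambda>x. W f x - (\<Sum>i\<in>F. c f i * x i))
          + (cmod b)^2 * nsq MB (\<lambda>x. W g x - (\<Sum>i\<in>F. c g i * x i)))"
        unfolding req by (rule nsq3[OF sqx[OF hsq] sqx[OF fsq] sqx[OF gsq]])
      also have "\<dots> \<le> 3 * (d + (cmod a)^2 * d + (cmod b)^2 * d)"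
        using th tf tg by (intro mult_left_mono add_mono mult_left_mono) auto
      also have "\<dots> = K * d" unfolding K_def by (simp add: algebra_simps)
      also have "\<dots> = e" unfolding d_def using K by simp
      finally show "nsq MB r \<le> 0 + e" by simp
    qed
    then have "AE x in MB. r x = 0" by (rule nsq_zero_AE[OF rsq])
    then show "AE chi in MB. W (\<lambda>x. a * f x + b * g x) chi = a * W f chi + b * W g chi"
      unfolding r_def h_def by simp
  qed
qed


theorem theorem4p6:
  fixes mu :: "(real^'n) measure" and Lam :: "(real^'n) set"
    and MB :: "(real^'n \<Rightarrow> complex) measure"
  assumes "prob_space mu" and "sets mu = sets borel"
    and "bohr_haar MB"
  shows "((\<forall>l\<in>Lam. \<forall>l'\<in>Lam. l \<noteq> l' \<longrightarrow>
              (LINT x|mu. expo l x * cnj (expo l' x)) = 0)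
          \<longleftrightarrow>
          (\<exists>W :: (real^'n \<Rightarrow> complex) \<Rightarrow> ((real^'n \<Rightarrow> complex) \<Rightarrow> complex).
              (\<forall>f\<in>closed_span mu Lam. sq_integrable MB (W f)) \<and>
              (\<forall>f\<in>closed_span mu Lam. \<forall>g\<in>closed_span mu Lam. \<forall>a b.
                  AE chi in MB. W (\<lambda>x. a * f x + b * g x) chi = a * W f chi + b * W g chi) \<and>
              (\<forall>f\<in>closed_span mu Lam. L2_norm MB (W f) = L2_norm mu f) \<and>
              (\<forall>l\<in>Lam. AE chi in MB. W (expo l) chi = chi l)))
       \<and>
         ((\<forall>l\<in>Lam. \<forall>l'\<in>Lam. l \<noteq> l' \<longrightarrow>
              (LINT x|mu. expo l x * cnj (expo l' x)) = 0)
          \<longleftrightarrow>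
          (\<forall>t. (\<integral>\<^sup>+ l. ennreal ((cmod (fourier_meas mu (t - l)))^2) \<partial>count_space Lam) \<le> 1))"
proof (rule conjI)
  show "(\<forall>l\<in>Lam. \<forall>l'\<in>Lam. l \<noteq> l' \<longrightarrow>
              (LINT x|mu. expo l x * cnj (expo l' x)) = 0)
          \<longleftrightarrow>
          (\<exists>W :: (real^'n \<Rightarrow> complex) \<Rightarrow> ((real^'n \<Rightarrow> complex) \<Rightarrow> complex).
              (\<forall>f\<in>closed_span mu Lam. sq_integrable MB (W f)) \<and>
              (\<forall>f\<in>closed_span mu Lam. \<forall>g\<in>closed_span mu Lam. \<forall>a b.
                  AE chi in MB. W (\<lambda>x. a * f x + b * g x) chi = a * W f chi + b * W g chi) \<and>
              (\<forall>f\<in>closed_span mu Lam. L2_norm MB (W f) = L2_norm mu f) \<and>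
              (\<forall>l\<in>Lam. AE chi in MB. W (expo l) chi = chi l))" (is "?I \<longleftrightarrow> ?II")
  proof
    assume H: ?I
    then have "orthonormal mu expo Lam" using on_iff[OF assms(1,2)] by blast
    then show ?II by (rule i_imp_ii[OF assms])
  next
    assume ?II
    then obtain W :: "(real^'n \<Rightarrow> complex) \<Rightarrow> ((real^'n \<Rightarrow> complex) \<Rightarrow> complex)" where
      W1: "\<forall>f\<in>closed_span mu Lam. sq_integrable MB (W f)" and
      W2: "\<forall>f\<in>closed_span mu Lam. \<forall>g\<in>closed_span mu Lam. \<forall>a b.
                  AE chi in MB. W (\<lambda>x. a * f x + b * g x) chi = a * W f chi + b * W g chi" and
      W3: "\<forall>f\<in>closed_span mu Lam. L2_norm MB (W f) = L2_norm mu f" and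
      W4: "\<forall>l\<in>Lam. AE chi in MB. W (expo l) chi = chi l"
      by blast
    show ?I by (rule ii_imp_i[OF assms W1 W2 W3 W4])
  qed
next
  show "(\<forall>l\<in>Lam. \<forall>l'\<in>Lam. l \<noteq> l' \<longrightarrow>
              (LINT x|mu. expo l x * cnj (expo l' x)) = 0)
          \<longleftrightarrow>
          (\<forall>t. (\<integral>\<^sup>+ l. ennreal ((cmod (fourier_meas mu (t - l)))^2) \<partial>count_space Lam) \<le> 1)"
    by (rule part_iii[OF assms(1,2)])
qed

end
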